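(* Let $\mu_i\in\mathcal P(X_i)$, $i=1,\dots,N$, let $c:X\to[0,\infty)$ be measurable with $c\in L^1(\mu_1\otimes\cdots\otimes\mu_N)$, and let $\pi^*\in\Pi(\mu_1,\dots,\mu_N)$ be the optimizer of $S_{\rm ent}(\mu_1,\dots,\mu_N,c)$. Then $$D_{\rm KL}(\pi,\pi^* )\le\mathcal F(\pi)-\mathcal F(\pi^* )\quad\text{for all }\pi\in\Pi(\mu_1,\dots,\mu_N).$$
   Context: $X=\prod_iX_i$ for Polish spaces $X_i$; $\Pi(\mu_1,\dots,\mu_N)$ = couplings; $S_{\rm ent}(\mu_1,\dots,\mu_N,c)=\inf_{\pi\in\Pi(\mu_1,\dots,\mu_N)}\int c\,d\pi+D_{\rm KL}(\pi,\mu_1\otimes\cdots\otimes\mu_N)$. For a probability $\pi$ on $X$ with marginals $\pi_1,\dots,\pi_N$, $\mathcal F(\pi)=\int c\,d\pi+D_{\rm KL}(\pi,\pi_1\otimes\cdots\otimes\pi_N)$. *)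

theory Defs
  imports "HOL-Probability.Probability"
begin

definition Polish_space :: "'a topology \<Rightarrow> bool" where
  "Polish_space X \<longleftrightarrow> completely_metrizable_space X \<and> separable_space X"

definition borel_of :: "'a topology \<Rightarrow> 'a measure" where
  "borel_of X = sigma (topspace X) {U. openin X U}"

definition D_KL :: "'a measure \<Rightarrow> 'a measure \<Rightarrow> ereal" where
  "D_KL P Q =
    (if sets P = sets Q \<and> absolutely_continuous Q P then
       (let f = (\<lambda>x. enn2real (RN_deriv Q P x));
            g = (\<lambda>x. f x * ln (f x))
        in enn2ereal (\<integral>\<^sup>+ x. ennreal (g x) \<partial>Q) - enn2ereal (\<integral>\<^sup>+ x. ennreal (- g x) \<partial>Q))
     else \<infinity>)"

definition prod_space :: "nat \<Rightarrow> (nat \<Rightarrow> 'a topology) \<Rightarrow> (nat \<Rightarrow> 'a) measure" where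
  "prod_space N X = PiM {1..N} (\<lambda>i. borel_of (X i))"

definition marginal :: "(nat \<Rightarrow> 'a topology) \<Rightarrow> (nat \<Rightarrow> 'a) measure \<Rightarrow> nat \<Rightarrow> 'a measure" where
  "marginal X \<pi> i = distr \<pi> (borel_of (X i)) (\<lambda>x. x i)"

definition couplings :: "nat \<Rightarrow> (nat \<Rightarrow> 'a topology) \<Rightarrow> (nat \<Rightarrow> 'a measure) \<Rightarrow> (nat \<Rightarrow> 'a) measure set" where
  "couplings N X \<mu> = {\<pi>. prob_space \<pi> \<and> sets \<pi> = sets (prod_space N X) \<and>
                          (\<forall>i\<in>{1..N}. marginal X \<pi> i = \<mu> i)}"

definition F_ent :: "nat \<Rightarrow> (nat \<Rightarrow> 'a topology) \<Rightarrow> ((nat \<Rightarrow> 'a) \<Rightarrow> real) \<Rightarrow> (nat \<Rightarrow> 'a) measure \<Rightarrow> ereal" where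
  "F_ent N X c \<pi> = enn2ereal (\<integral>\<^sup>+ x. ennreal (c x) \<partial>\<pi>) + D_KL \<pi> (PiM {1..N} (marginal X \<pi>))"

definition S_ent :: "nat \<Rightarrow> (nat \<Rightarrow> 'a topology) \<Rightarrow> (nat \<Rightarrow> 'a measure) \<Rightarrow> ((nat \<Rightarrow> 'a) \<Rightarrow> real) \<Rightarrow> ereal" where
  "S_ent N X \<mu> c = (INF \<pi>\<in>couplings N X \<mu>.
      enn2ereal (\<integral>\<^sup>+ x. ennreal (c x) \<partial>\<pi>) + D_KL \<pi> (PiM {1..N} \<mu>))"

end

theory Submission
  imports Defs "HOL-Real_Asymp.Real_Asymp"
begin


definition psi :: "real \<Rightarrow> real" where "psi x = x * ln x - x + 1"

lemma psi_nonneg: "0 \<le> x \<Longrightarrow> 0 \<le> psi x"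
proof (cases "x = 0")
  case False
  assume x: "0 \<le> x"
  hence xp: "0 < x" using False by auto
  have "ln (1/x) \<le> 1/x - 1" using xp by (intro ln_le_minus_one) auto
  hence "- ln x \<le> 1/x - 1" using xp by (simp add: ln_div)
  hence "x * (- ln x) \<le> x * (1/x - 1)" using xp by (intro mult_left_mono) auto
  also have "x * (1/x - 1) = 1 - x" using xp by (simp add: field_simps)
  finally show ?thesis by (simp add: psi_def)
qed (simp add: psi_def)

lemma kl_nonneg: fixes a f :: real assumes "0 \<le> a" "0 < f" shows "0 \<le> a * ln (a / f) - a + f"
proof -
  have "0 \<le> f * psi (a / f)" using assms by (intro mult_nonneg_nonneg psi_nonneg) auto
  also have "f * psi (a / f) = a * ln (a / f) - a + f" using assms by (simp add: psi_def field_simps)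
  finally show ?thesis .
qed

lemma phi_lower: "0 \<le> (x::real) \<Longrightarrow> - (x * ln x) \<le> 1"
  using psi_nonneg[of x] by (simp add: psi_def)



lemma ennreal_split_aux:
  fixes f p :: real assumes f: "0 \<le> f"
  shows "ennreal (f * ln f) + 1 = ennreal (psi f) + ennreal f + ennreal (- (f * ln f))"
proof -
  have ps: "0 \<le> psi f" using psi_nonneg f .
  show ?thesis
  proof (cases "0 \<le> f * ln f")
    case True
    have "ennreal (- (f * ln f)) = 0" using True by (simp add: ennreal_neg)
    moreover have "ennreal (f * ln f) + 1 = ennreal (f * ln f + 1)" using True by (simp add: ennreal_plus)
    moreover have "ennreal (psi f) + ennreal f = ennreal (psi f + f)" using ps f by (simp add: ennreal_plus)
    moreover have "f * ln f + 1 = psi f + f" by (simp add: psi_def)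
    ultimately show ?thesis by simp
  next
    case False
    have "ennreal (f * ln f) = 0" using False by (simp add: ennreal_neg)
    moreover have "ennreal (psi f) + ennreal f = ennreal (psi f + f)"
      using ps f by (simp add: ennreal_plus)
    moreover have "ennreal (psi f + f) + ennreal (- (f * ln f)) = ennreal (psi f + f + - (f * ln f))"
      using ps f False by (intro ennreal_plus[symmetric]) auto
    moreover have "psi f + f + - (f * ln f) = 1" by (simp add: psi_def)
    ultimately show ?thesis by simp
  qed
qed

lemma D_KL_repr:
  assumes Q: "prob_space Q" and nu: "prob_space \<nu>" and sets: "sets \<nu> = sets Q"
    and ac: "absolutely_continuous Q \<nu>"
  shows "D_KL \<nu> Q = enn2ereal (\<integral>\<^sup>+x. ennreal (psi (enn2real (RN_deriv Q \<nu> x))) \<partial>Q)"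
proof -
  interpret Q: prob_space Q by fact
  interpret N: prob_space \<nu> by fact
  define f where "f = (\<lambda>x. enn2real (RN_deriv Q \<nu> x))"
  have fm[measurable]: "f \<in> borel_measurable Q" unfolding f_def by measurable
  have fin: "AE x in Q. RN_deriv Q \<nu> x \<noteq> \<infinity>"
    by (rule Q.RN_deriv_finite) (auto simp: ac sets N.sigma_finite_measure)
  have dens: "density Q (RN_deriv Q \<nu>) = \<nu>" by (rule Q.density_RN_deriv[OF ac sets])
  have "(\<integral>\<^sup>+x. ennreal (f x) \<partial>Q) = (\<integral>\<^sup>+x. RN_deriv Q \<nu> x \<partial>Q)"
    using fin by (intro nn_integral_cong_AE) (auto simp: f_def ennreal_enn2real_if)
  also have "\<dots> = (\<integral>\<^sup>+x. RN_deriv Q \<nu> x * 1 \<partial>Q)" by simp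
  also have "\<dots> = (\<integral>\<^sup>+x. 1 \<partial>density Q (RN_deriv Q \<nu>))"
    by (subst nn_integral_density) auto
  also have "\<dots> = 1" unfolding dens using N.emeasure_space_1 by simp
  finally have intf: "(\<integral>\<^sup>+x. ennreal (f x) \<partial>Q) = 1" .
  define A where "A = (\<integral>\<^sup>+x. ennreal (f x * ln (f x)) \<partial>Q)"
  define B where "B = (\<integral>\<^sup>+x. ennreal (- (f x * ln (f x))) \<partial>Q)"
  define P where "P = (\<integral>\<^sup>+x. ennreal (psi (f x)) \<partial>Q)"
  have "A + 1 = (\<integral>\<^sup>+x. ennreal (f x * ln (f x)) + 1 \<partial>Q)"
    unfolding A_def by (subst nn_integral_add) (auto simp: Q.emeasure_space_1)
  also have "\<dots> = (\<integral>\<^sup>+x. ennreal (psi (f x)) + ennreal (f x) + ennreal (- (f x * ln (f x))) \<partial>Q)"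
    by (intro nn_integral_cong ennreal_split_aux) (auto simp: f_def)
  also have "\<dots> = P + 1 + B"
    unfolding P_def B_def intf[symmetric] psi_def
    by (subst nn_integral_add; (subst nn_integral_add)?) auto
  finally have eq: "A + 1 = P + 1 + B" .
  have "B \<le> (\<integral>\<^sup>+x. 1 \<partial>Q)" unfolding B_def
    by (intro nn_integral_mono) (metis ennreal_1 ennreal_leI enn2real_nonneg f_def phi_lower)
  hence B1: "B \<le> 1" by (simp add: Q.emeasure_space_1)
  hence Bfin: "B < top" by (meson ennreal_one_less_top order.strict_trans1)
  have main: "enn2ereal A - enn2ereal B = enn2ereal P"
  proof (cases "P = top")
    case True
    hence "A = top" using eq by (auto simp: ennreal_add_eq_top)
    thus ?thesis using True Bfin by (auto)
  next
    case False
    hence Afin: "A < top" using eq Bfin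
      by (metis ennreal_add_eq_top ennreal_one_less_top less_top order.strict_iff_not)
    obtain a b p where "A = ennreal a" "B = ennreal b" "P = ennreal p" "0\<le>a" "0\<le>b" "0\<le>p"
      using Afin Bfin False by (metis ennreal_cases less_top top.not_eq_extremum infinity_ennreal_def)
    with eq show ?thesis
      by (simp add: ennreal_plus[symmetric] del: ennreal_plus)
  qed
  have "D_KL \<nu> Q = enn2ereal A - enn2ereal B"
    unfolding D_KL_def A_def B_def f_def using sets ac by (simp add: Let_def)
  thus ?thesis using main by (simp add: P_def f_def)
qed

lemma dens_real:
  assumes Q: "prob_space Q" and nu: "prob_space \<nu>" and sets: "sets \<nu> = sets Q"
    and ac: "absolutely_continuous Q \<nu>"
  shows "density Q (\<lambda>x. ennreal (enn2real (RN_deriv Q \<nu> x))) = \<nu>"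
proof -
  interpret Q: prob_space Q by fact
  interpret N: prob_space \<nu> by fact
  have fin: "AE x in Q. RN_deriv Q \<nu> x \<noteq> \<infinity>"
    by (rule Q.RN_deriv_finite) (auto simp: ac sets N.sigma_finite_measure)
  have "density Q (\<lambda>x. ennreal (enn2real (RN_deriv Q \<nu> x))) = density Q (RN_deriv Q \<nu>)"
    using fin by (intro density_cong) (auto simp: ennreal_enn2real_if)
  also have "\<dots> = \<nu>" by (rule Q.density_RN_deriv[OF ac sets])
  finally show ?thesis .
qed

lemma D_KL_density:
  assumes Q: "prob_space Q" and fm: "f \<in> borel_measurable Q" and f0: "\<And>x. 0 \<le> f x"
    and nu: "prob_space (density Q (\<lambda>x. ennreal (f x)))"
  shows "D_KL (density Q (\<lambda>x. ennreal (f x))) Q = enn2ereal (\<integral>\<^sup>+x. ennreal (psi (f x)) \<partial>Q)"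
proof -
  interpret Q: prob_space Q by fact
  let ?n = "density Q (\<lambda>x. ennreal (f x))"
  have ac: "absolutely_continuous Q ?n" using fm by (intro absolutely_continuousI_density) auto
  have "D_KL ?n Q = enn2ereal (\<integral>\<^sup>+x. ennreal (psi (enn2real (RN_deriv Q ?n x))) \<partial>Q)"
    by (rule D_KL_repr[OF Q nu _ ac]) simp
  also have "(\<integral>\<^sup>+x. ennreal (psi (enn2real (RN_deriv Q ?n x))) \<partial>Q) = (\<integral>\<^sup>+x. ennreal (psi (f x)) \<partial>Q)"
  proof (intro nn_integral_cong_AE)
    have "AE x in Q. ennreal (f x) = RN_deriv Q ?n x"
      using fm by (intro Q.RN_deriv_unique) auto
    thus "AE x in Q. ennreal (psi (enn2real (RN_deriv Q ?n x))) = ennreal (psi (f x))"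
      by eventually_elim (metis enn2real_ennreal f0)
  qed
  finally show ?thesis .
qed



definition kk :: "real \<Rightarrow> real \<Rightarrow> real" where "kk a f = a * ln (a / f) - a + f"

lemma ln_div_mult: "0 \<le> (a::real) \<Longrightarrow> 0 < f \<Longrightarrow> a * ln (a / f) = a * ln a - a * ln f"
  by (cases "a = 0") (auto simp: ln_div algebra_simps)

lemma zero_mix:
  fixes a b t :: real
  assumes a: "0 \<le> a" and b: "0 \<le> b" and t: "0 < t" "t < 1" and z: "(1-t)*a + t*b = 0"
  shows "a = 0 \<and> b = 0"
proof -
  have "0 \<le> (1-t)*a" "0 \<le> t*b" using a b t by auto
  hence "(1-t)*a = 0" "t*b = 0" using z by linarith+
  thus ?thesis using t by auto
qed

lemma mix_identity:
  fixes a b t :: real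
  assumes a: "0 \<le> a" and b: "0 \<le> b" and t: "0 < t" "t < 1"
  shows "(1-t) * psi a + t * psi b = psi ((1-t)*a + t*b) + (1-t) * kk a ((1-t)*a + t*b) + t * kk b ((1-t)*a + t*b)"
proof (cases "(1-t)*a + t*b = 0")
  case True
  hence "a = 0" "b = 0" using zero_mix[OF a b t] by auto
  thus ?thesis by (simp add: psi_def kk_def algebra_simps)
next
  case False
  define f where "f = (1-t)*a + t*b"
  have fp: "0 < f" using False a b t unfolding f_def
    by (smt (verit) mult_nonneg_nonneg)
  have "(1-t) * psi a + t * psi b = psi f + (1-t) * kk a f + t * kk b f"
    unfolding psi_def kk_def ln_div_mult[OF a fp] ln_div_mult[OF b fp]
    unfolding f_def by (simp add: algebra_simps)
  thus ?thesis by (simp add: f_def)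
qed

lemma kk_mix_nonneg:
  fixes a b t :: real
  assumes a: "0 \<le> a" and b: "0 \<le> b" and t: "0 < t" "t < 1"
  shows "0 \<le> kk a ((1-t)*a + t*b)"
proof (cases "(1-t)*a + t*b = 0")
  case True
  hence "a = 0" "b = 0" using zero_mix[OF a b t] by auto
  thus ?thesis by (simp add: kk_def)
next
  case False
  hence "0 < (1-t)*a + t*b" using a b t by (smt (verit) mult_nonneg_nonneg)
  thus ?thesis unfolding kk_def by (rule kl_nonneg[OF a])
qed

lemma psi_dens: "0 < h \<Longrightarrow> h * psi (g / h) = kk g h"
  by (cases "g = 0") (auto simp: psi_def kk_def field_simps)

definition tn :: "nat \<Rightarrow> real" where "tn n = 1 / (real n + 2)"

lemma tn_bounds: "0 < tn n" "tn n < 1"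
  by (auto simp: tn_def)

lemma tn_lim: "tn \<longlonglongrightarrow> 0"
  unfolding tn_def
  by real_asymp

definition Tlim :: "real \<Rightarrow> real \<Rightarrow> ennreal" where
  "Tlim g h = (if h = 0 \<and> 0 < g then \<infinity> else ennreal (kk g h))"

lemma kk_conv:
  fixes g h :: real
  assumes g: "0 \<le> g" and h: "0 \<le> h"
  shows "(\<lambda>n. ennreal (kk g ((1 - tn n) * h + tn n * g))) \<longlonglongrightarrow> Tlim g h"
proof (cases "h = 0 \<and> 0 < g")
  case True
  hence h0: "h = 0" and gp: "0 < g" by auto
  have eq: "kk g ((1 - tn n) * h + tn n * g) = g * ln (real n + 2) + (g * tn n - g)" for n
  proof -
    have "g / (tn n * g) = real n + 2" using gp by (simp add: tn_def)
    thus ?thesis using h0 by (simp add: kk_def algebra_simps)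
  qed
  have "filterlim (\<lambda>n::nat. ln (real n + 2)) at_top sequentially"
    by real_asymp
  hence "filterlim (\<lambda>n::nat. g * ln (real n + 2)) at_top sequentially"
    using gp by (intro filterlim_tendsto_pos_mult_at_top[OF tendsto_const]) auto
  moreover have "(\<lambda>n. g * tn n - g) \<longlonglongrightarrow> g * 0 - g"
    by (intro tendsto_intros tn_lim)
  ultimately have "filterlim (\<lambda>n. (g * tn n - g) + g * ln (real n + 2)) at_top sequentially"
    by (intro filterlim_tendsto_add_at_top) auto
  hence "filterlim (\<lambda>n. g * ln (real n + 2) + (g * tn n - g)) at_top sequentially"
    by (simp add: add.commute)
  hence "filterlim (\<lambda>n. kk g ((1 - tn n) * h + tn n * g)) at_top sequentially"
    unfolding eq .
  hence "(\<lambda>n. ennreal (kk g ((1 - tn n) * h + tn n * g))) \<longlonglongrightarrow> top"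
    by (simp add: ennreal_tendsto_top_eq_at_top)
  thus ?thesis using True by (simp add: Tlim_def)
next
  case False
  have lim_f: "(\<lambda>n. (1 - tn n) * h + tn n * g) \<longlonglongrightarrow> (1 - 0) * h + 0 * g"
    by (intro tendsto_intros tn_lim)
  have "(\<lambda>n. kk g ((1 - tn n) * h + tn n * g)) \<longlonglongrightarrow> kk g h"
  proof (cases "g = 0")
    case True
    thus ?thesis using lim_f by (simp add: kk_def)
  next
    case gne: False
    hence hp: "0 < h" using False g h by auto
    show ?thesis unfolding kk_def
      using lim_f hp gne g
      by (auto intro!: tendsto_intros)
  qed
  thus ?thesis using False unfolding Tlim_def by (simp only: if_False) (rule tendsto_ennrealI)
qed



lemma psi_meas[measurable]: assumes [measurable]: "f \<in> borel_measurable M" shows "(\<lambda>x. psi (f x)) \<in> borel_measurable M"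
  unfolding psi_def by measurable

lemma kk_meas[measurable]: assumes [measurable]: "f \<in> borel_measurable M" "g \<in> borel_measurable M" shows "(\<lambda>x. kk (f x) (g x)) \<in> borel_measurable M"
  unfolding kk_def by measurable

lemma Tlim_meas[measurable]: assumes [measurable]: "f \<in> borel_measurable M" "g \<in> borel_measurable M" shows "(\<lambda>x. Tlim (f x) (g x)) \<in> borel_measurable M"
  unfolding Tlim_def by measurable

definition Gf :: "('b \<Rightarrow> real) \<Rightarrow> 'b measure \<Rightarrow> 'b measure \<Rightarrow> ereal" where
  "Gf c P \<nu> = enn2ereal (\<integral>\<^sup>+x. ennreal (c x) \<partial>\<nu>) + D_KL \<nu> P"

lemma D_KL_not_ac: "\<not> absolutely_continuous Q \<nu> \<Longrightarrow> D_KL \<nu> Q = \<infinity>"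
  unfolding D_KL_def by auto

lemma enn2ereal_add: "enn2ereal a + enn2ereal b = enn2ereal (a + b)"
  by (simp add: plus_ennreal.rep_eq)

lemma enn2ereal_le_iff: "enn2ereal a \<le> enn2ereal b \<longleftrightarrow> a \<le> b"
  by (simp add: less_eq_ennreal.rep_eq)

lemma kk_mix_nonneg2:
  fixes a b t :: real
  assumes a: "0 \<le> a" and b: "0 \<le> b" and t: "0 < t" "t < 1"
  shows "0 \<le> kk b ((1-t)*a + t*b)"
proof -
  have "0 \<le> kk b ((1-(1-t))*b + (1-t)*a)" by (rule kk_mix_nonneg) (use a b t in auto)
  thus ?thesis by (simp add: add.commute)
qed

lemma mix_identity_enn:
  fixes a b t :: real
  assumes a: "0 \<le> a" and b: "0 \<le> b" and t: "0 < t" "t < 1"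
  shows "ennreal (1-t) * ennreal (psi a) + ennreal t * ennreal (psi b) =
    ennreal (psi ((1-t)*a + t*b)) + ennreal (1-t) * ennreal (kk a ((1-t)*a + t*b)) + ennreal t * ennreal (kk b ((1-t)*a + t*b))"
proof -
  let ?f = "(1-t)*a + t*b"
  have f0: "0 \<le> ?f" using a b t by auto
  have n1: "0 \<le> (1-t) * psi a" "0 \<le> t * psi b" using a b t psi_nonneg by auto
  have n2: "0 \<le> psi ?f" "0 \<le> (1-t) * kk a ?f" "0 \<le> t * kk b ?f"
    using psi_nonneg[OF f0] kk_mix_nonneg[OF a b t] kk_mix_nonneg2[OF a b t] t by auto
  have "ennreal ((1-t)*psi a + t*psi b) = ennreal (psi ?f + (1-t)*kk a ?f + t*kk b ?f)"
    using mix_identity[OF a b t] by simp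
  hence "ennreal ((1-t)*psi a) + ennreal (t*psi b) = ennreal (psi ?f) + ennreal ((1-t)*kk a ?f) + ennreal (t*kk b ?f)"
    using n1 n2 by (simp add: ennreal_plus)
  thus ?thesis using t a b psi_nonneg kk_mix_nonneg[OF a b t] kk_mix_nonneg2[OF a b t]
    by (simp add: ennreal_mult)
qed



lemma key:
  assumes P: "prob_space P"
    and K: "\<And>\<nu>. \<nu> \<in> K \<Longrightarrow> prob_space \<nu> \<and> sets \<nu> = sets P"
    and Kmix: "\<And>f g t. f \<in> borel_measurable P \<Longrightarrow> g \<in> borel_measurable P \<Longrightarrow>
        density P f \<in> K \<Longrightarrow> density P g \<in> K \<Longrightarrow> 0 < t \<Longrightarrow> t < 1 \<Longrightarrow>
        density P (\<lambda>x. ennreal (1-t) * f x + ennreal t * g x) \<in> K"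
    and ps: "\<pi>s \<in> K" and pi: "\<pi> \<in> K"
    and opt: "\<And>\<nu>. \<nu> \<in> K \<Longrightarrow> Gf c P \<pi>s \<le> Gf c P \<nu>"
    and fin: "Gf c P \<pi>s < \<infinity>"
    and cm[measurable]: "c \<in> borel_measurable P" and c0: "\<And>x. x \<in> space P \<Longrightarrow> 0 \<le> c x"
  shows "D_KL \<pi> \<pi>s \<le> Gf c P \<pi> - Gf c P \<pi>s"
proof -
  interpret P: prob_space P by fact
  have ps_prob: "prob_space \<pi>s" and ps_sets: "sets \<pi>s = sets P" using K[OF ps] by auto
  have pi_prob: "prob_space \<pi>" and pi_sets: "sets \<pi> = sets P" using K[OF pi] by auto
  have ac_s: "absolutely_continuous P \<pi>s"
  proof (rule ccontr)
    assume "\<not> ?thesis"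
    hence "D_KL \<pi>s P = \<infinity>" by (rule D_KL_not_ac)
    hence "Gf c P \<pi>s = \<infinity>" unfolding Gf_def by simp
    thus False using fin by simp
  qed
  define h where "h = (\<lambda>x. enn2real (RN_deriv P \<pi>s x))"
  have hm[measurable]: "h \<in> borel_measurable P" unfolding h_def by measurable
  have h0: "\<And>x. 0 \<le> h x" unfolding h_def by simp
  have hdens: "density P (\<lambda>x. ennreal (h x)) = \<pi>s"
    unfolding h_def by (rule dens_real[OF P ps_prob ps_sets ac_s])
  define Cs where "Cs = (\<integral>\<^sup>+x. ennreal (c x) \<partial>\<pi>s)"
  define Ds where "Ds = (\<integral>\<^sup>+x. ennreal (psi (h x)) \<partial>P)"
  have Gs: "Gf c P \<pi>s = enn2ereal Cs + enn2ereal Ds"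
    unfolding Gf_def Cs_def Ds_def h_def using D_KL_repr[OF P ps_prob ps_sets ac_s] by simp
  have "enn2ereal (Cs + Ds) \<noteq> \<infinity>" using fin Gs by (simp add: enn2ereal_add)
  hence "Cs + Ds \<noteq> top" by simp
  hence "Cs < top" "Ds < top" by (auto simp: top.not_eq_extremum)
  then obtain cs ds where cs: "Cs = ennreal cs" "0 \<le> cs" and ds: "Ds = ennreal ds" "0 \<le> ds"
    by (auto simp: less_top_ennreal)
  have Gs': "Gf c P \<pi>s = ereal (cs + ds)" using Gs cs ds by simp
  show ?thesis
  proof (cases "Gf c P \<pi> = \<infinity>")
    case True
    thus ?thesis using Gs' by simp
  next
    case False
    have ac_p: "absolutely_continuous P \<pi>"
    proof (rule ccontr)
      assume "\<not> ?thesis"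
      hence "D_KL \<pi> P = \<infinity>" by (rule D_KL_not_ac)
      hence "Gf c P \<pi> = \<infinity>" unfolding Gf_def by simp
      thus False using False by simp
    qed
    define g where "g = (\<lambda>x. enn2real (RN_deriv P \<pi> x))"
    have gm[measurable]: "g \<in> borel_measurable P" unfolding g_def by measurable
    have g0: "\<And>x. 0 \<le> g x" unfolding g_def by simp
    have gdens: "density P (\<lambda>x. ennreal (g x)) = \<pi>"
      unfolding g_def by (rule dens_real[OF P pi_prob pi_sets ac_p])
    define C1 where "C1 = (\<integral>\<^sup>+x. ennreal (c x) \<partial>\<pi>)"
    define D1 where "D1 = (\<integral>\<^sup>+x. ennreal (psi (g x)) \<partial>P)"
    have G1: "Gf c P \<pi> = enn2ereal C1 + enn2ereal D1"
      unfolding Gf_def C1_def D1_def g_def using D_KL_repr[OF P pi_prob pi_sets ac_p] by simp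
    have "enn2ereal (C1 + D1) \<noteq> \<infinity>" using False G1 by (simp add: enn2ereal_add)
    hence "C1 + D1 \<noteq> top" by simp
    hence "C1 < top" "D1 < top" by (auto simp: top.not_eq_extremum)
    then obtain c1 d1 where c1: "C1 = ennreal c1" "0 \<le> c1" and d1: "D1 = ennreal d1" "0 \<le> d1"
      by (auto simp: less_top_ennreal)
    have G1': "Gf c P \<pi> = ereal (c1 + d1)" using G1 c1 d1 by simp
    define B where "B = c1 + d1 - (cs + ds)"
    have B0: "0 \<le> B" using opt[OF pi] Gs' G1' by (simp add: B_def)
    have RHS: "Gf c P \<pi> - Gf c P \<pi>s = enn2ereal (ennreal B)"
      using Gs' G1' B0 by (simp add: B_def)
    have Cdens: "(\<integral>\<^sup>+x. ennreal (c x) \<partial>density P (\<lambda>x. ennreal (f x))) = (\<integral>\<^sup>+x. ennreal (f x) * ennreal (c x) \<partial>P)"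
      if [measurable]: "f \<in> borel_measurable P" for f
      by (subst nn_integral_density) auto
    have Kbound: "(\<integral>\<^sup>+x. ennreal (kk (g x) ((1-t) * h x + t * g x)) \<partial>P) \<le> ennreal B"
      if t: "0 < t" "t < 1" for t
    proof -
      define ft where "ft = (\<lambda>x. (1-t) * h x + t * g x)"
      have ftm[measurable]: "ft \<in> borel_measurable P" unfolding ft_def by measurable
      have ft0: "\<And>x. 0 \<le> ft x" unfolding ft_def using t h0 g0 by auto
      have fteq: "ennreal (ft x) = ennreal (1-t) * ennreal (h x) + ennreal t * ennreal (g x)" for x
      proof -
        have "0 \<le> (1-t) * h x" "0 \<le> t * g x" using t h0 g0 by auto
        thus ?thesis unfolding ft_def using t h0 g0 by (simp add: ennreal_plus ennreal_mult)
      qed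
      let ?pt = "density P (\<lambda>x. ennreal (ft x))"
      have "density P (\<lambda>x. ennreal (1-t) * ennreal (h x) + ennreal t * ennreal (g x)) \<in> K"
        by (rule Kmix) (use hdens gdens ps pi t in auto)
      hence ptK: "?pt \<in> K" unfolding fteq .
      have pt_prob: "prob_space ?pt" using K[OF ptK] by auto
      define Dt where "Dt = (\<integral>\<^sup>+x. ennreal (psi (ft x)) \<partial>P)"
      have DKt: "D_KL ?pt P = enn2ereal Dt"
        unfolding Dt_def by (rule D_KL_density[OF P ftm ft0 pt_prob])
      have Cs': "Cs = (\<integral>\<^sup>+x. ennreal (h x) * ennreal (c x) \<partial>P)"
        unfolding Cs_def hdens[symmetric] by (rule Cdens) measurable
      have C1': "C1 = (\<integral>\<^sup>+x. ennreal (g x) * ennreal (c x) \<partial>P)"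
        unfolding C1_def gdens[symmetric] by (rule Cdens) measurable
      have Ct: "(\<integral>\<^sup>+x. ennreal (c x) \<partial>?pt) = ennreal (1-t) * Cs + ennreal t * C1"
      proof -
        have "(\<integral>\<^sup>+x. ennreal (c x) \<partial>?pt) = (\<integral>\<^sup>+x. ennreal (ft x) * ennreal (c x) \<partial>P)"
          by (rule Cdens) measurable
        also have "\<dots> = (\<integral>\<^sup>+x. ennreal (1-t) * (ennreal (h x) * ennreal (c x)) + ennreal t * (ennreal (g x) * ennreal (c x)) \<partial>P)"
          unfolding fteq by (simp add: distrib_right mult.assoc)
        also have "\<dots> = ennreal (1-t) * Cs + ennreal t * C1"
          unfolding Cs' C1' by (simp add: nn_integral_add nn_integral_cmult)
        finally show ?thesis .
      qed
      define Kh where "Kh = (\<integral>\<^sup>+x. ennreal (kk (h x) (ft x)) \<partial>P)"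
      define Kg where "Kg = (\<integral>\<^sup>+x. ennreal (kk (g x) (ft x)) \<partial>P)"
      have ident: "ennreal (1-t) * Ds + ennreal t * D1 = Dt + ennreal (1-t) * Kh + ennreal t * Kg"
      proof -
        have "ennreal (1-t) * Ds + ennreal t * D1 =
          (\<integral>\<^sup>+x. ennreal (1-t) * ennreal (psi (h x)) + ennreal t * ennreal (psi (g x)) \<partial>P)"
          unfolding Ds_def D1_def by (simp add: nn_integral_add nn_integral_cmult)
        also have "\<dots> = (\<integral>\<^sup>+x. ennreal (psi (ft x)) + ennreal (1-t) * ennreal (kk (h x) (ft x)) + ennreal t * ennreal (kk (g x) (ft x)) \<partial>P)"
          unfolding ft_def by (intro nn_integral_cong mix_identity_enn h0 g0 t)
        also have "\<dots> = Dt + ennreal (1-t) * Kh + ennreal t * Kg"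
          unfolding Dt_def Kh_def Kg_def by (simp add: nn_integral_add nn_integral_cmult)
        finally show ?thesis .
      qed
      have Gt: "Gf c P ?pt = enn2ereal ((ennreal (1-t) * Cs + ennreal t * C1) + Dt)"
        unfolding Gf_def Ct DKt by (simp add: enn2ereal_add)
      have "Gf c P \<pi>s \<le> Gf c P ?pt" by (rule opt[OF ptK])
      hence "enn2ereal (Cs + Ds) \<le> enn2ereal ((ennreal (1-t) * Cs + ennreal t * C1) + Dt)"
        unfolding Gt Gs by (simp add: enn2ereal_add)
      hence opt_t: "Cs + Ds \<le> (ennreal (1-t) * Cs + ennreal t * C1) + Dt"
        by (simp add: enn2ereal_le_iff)
      have "ennreal t * Kg < top"
      proof -
        have "ennreal t * Kg \<le> ennreal (1-t) * Ds + ennreal t * D1" unfolding ident by simp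
        also have "\<dots> < top" using ds d1 by (simp add: ennreal_mult_less_top)
        finally show ?thesis .
      qed
      hence "Kg < top" using t by (auto simp: ennreal_mult_less_top top.not_eq_extremum ennreal_mult_eq_top_iff)
      then obtain kg where kg: "Kg = ennreal kg" "0 \<le> kg" by (auto simp: less_top_ennreal)
      have "ennreal (1-t) * Kh < top"
      proof -
        have "ennreal (1-t) * Kh \<le> ennreal (1-t) * Ds + ennreal t * D1" unfolding ident
          by (metis add.commute add.left_commute le_iff_add)
        also have "\<dots> < top" using ds d1 by (simp add: ennreal_mult_less_top)
        finally show ?thesis .
      qed
      hence "Kh < top" using t by (auto simp: ennreal_mult_less_top top.not_eq_extremum ennreal_mult_eq_top_iff)
      then obtain kh where kh: "Kh = ennreal kh" "0 \<le> kh" by (auto simp: less_top_ennreal)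
      have "Cs + Ds + (ennreal (1-t) * Kh + ennreal t * Kg) \<le>
          (ennreal (1-t) * Cs + ennreal t * C1) + Dt + (ennreal (1-t) * Kh + ennreal t * Kg)"
        using opt_t by (rule add_right_mono)
      also have "\<dots> = (ennreal (1-t) * Cs + ennreal t * C1) + (ennreal (1-t) * Ds + ennreal t * D1)"
        unfolding ident by (simp add: add.assoc)
      finally have E0: "Cs + Ds + (ennreal (1-t) * Kh + ennreal t * Kg) \<le>
          (ennreal (1-t) * Cs + ennreal t * C1) + (ennreal (1-t) * Ds + ennreal t * D1)" .
      have nn: "0 \<le> (1-t)*kh" "0 \<le> t*kg" "0 \<le> (1-t)*cs" "0 \<le> t*c1" "0 \<le> (1-t)*ds" "0 \<le> t*d1"
        using t kh kg cs ds c1 d1 by auto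
      have "ennreal (cs + ds + ((1-t)*kh + t*kg)) \<le> ennreal (((1-t)*cs + t*c1) + ((1-t)*ds + t*d1))"
        using E0 nn t kh kg cs ds c1 d1 by (simp add: ennreal_plus ennreal_mult)
      hence "cs + ds + ((1-t)*kh + t*kg) \<le> ((1-t)*cs + t*c1) + ((1-t)*ds + t*d1)"
        using nn by (subst (asm) ennreal_le_iff) auto
      hence "t * kg \<le> t * B" using nn unfolding B_def by (simp add: algebra_simps)
      hence "kg \<le> B" using t by simp
      hence "Kg \<le> ennreal B" unfolding kg by (simp add: ennreal_leI)
      thus ?thesis unfolding Kg_def ft_def .
    qed
    have Tbound: "(\<integral>\<^sup>+x. Tlim (g x) (h x) \<partial>P) \<le> ennreal B"
    proof -
      have "(\<integral>\<^sup>+x. Tlim (g x) (h x) \<partial>P) = (\<integral>\<^sup>+x. liminf (\<lambda>n. ennreal (kk (g x) ((1 - tn n) * h x + tn n * g x))) \<partial>P)"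
        by (intro nn_integral_cong lim_imp_Liminf[symmetric] kk_conv g0 h0) simp
      also have "\<dots> \<le> liminf (\<lambda>n. \<integral>\<^sup>+x. ennreal (kk (g x) ((1 - tn n) * h x + tn n * g x)) \<partial>P)"
        by (intro nn_integral_liminf) measurable
      also have "\<dots> \<le> ennreal B"
        by (rule order_trans[OF Liminf_le_Limsup Limsup_bounded]) (auto intro!: always_eventually Kbound tn_bounds)
      finally show ?thesis .
    qed
    have AEng: "AE x in P. \<not> (h x = 0 \<and> 0 < g x)"
    proof -
      have "AE x in P. Tlim (g x) (h x) \<noteq> \<infinity>"
        by (rule nn_integral_PInf_AE) (use Tbound in \<open>auto simp: top_unique\<close>)
      thus ?thesis by eventually_elim (auto simp: Tlim_def)
    qed
    define r0 where "r0 = (\<lambda>x. if 0 < h x then g x / h x else 0)"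
    have r0m[measurable]: "r0 \<in> borel_measurable P" unfolding r0_def by measurable
    have r0m': "(\<lambda>x. ennreal (r0 x)) \<in> borel_measurable \<pi>s"
      unfolding measurable_cong_sets[OF ps_sets refl] by measurable
    have pidens: "density \<pi>s (\<lambda>x. ennreal (r0 x)) = \<pi>"
    proof -
      have "density \<pi>s (\<lambda>x. ennreal (r0 x)) = density P (\<lambda>x. ennreal (h x) * ennreal (r0 x))"
        unfolding hdens[symmetric] by (rule density_density_eq) measurable
      also have "\<dots> = density P (\<lambda>x. ennreal (g x))"
      proof (rule density_cong)
        show "AE x in P. ennreal (h x) * ennreal (r0 x) = ennreal (g x)"
          using AEng
        proof eventually_elim
          case (elim x)
          show ?case
          proof (cases "0 < h x")
            case True
            thus ?thesis by (simp add: r0_def ennreal_mult[symmetric] g0)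
          next
            case False
            hence "h x = 0" using h0[of x] by simp
            moreover have "g x = 0" using elim g0[of x] \<open>h x = 0\<close> by auto
            ultimately show ?thesis by (simp add: r0_def)
          qed
        qed
      qed measurable
      also have "\<dots> = \<pi>" by (rule gdens)
      finally show ?thesis .
    qed
    interpret PS: prob_space \<pi>s by (rule ps_prob)
    have ac: "absolutely_continuous \<pi>s \<pi>"
      unfolding pidens[symmetric] by (rule absolutely_continuousI_density[OF r0m'])
    have RN: "AE x in \<pi>s. ennreal (r0 x) = RN_deriv \<pi>s \<pi> x"
      by (rule PS.RN_deriv_unique[OF r0m' pidens])
    have "D_KL \<pi> \<pi>s = enn2ereal (\<integral>\<^sup>+x. ennreal (psi (enn2real (RN_deriv \<pi>s \<pi> x))) \<partial>\<pi>s)"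
      by (rule D_KL_repr[OF ps_prob pi_prob _ ac]) (simp add: ps_sets pi_sets)
    also have "(\<integral>\<^sup>+x. ennreal (psi (enn2real (RN_deriv \<pi>s \<pi> x))) \<partial>\<pi>s) = (\<integral>\<^sup>+x. ennreal (psi (r0 x)) \<partial>\<pi>s)"
    proof (intro nn_integral_cong_AE)
      have r0n: "\<And>x. 0 \<le> r0 x" unfolding r0_def using g0 h0 by simp
      from RN show "AE x in \<pi>s. ennreal (psi (enn2real (RN_deriv \<pi>s \<pi> x))) = ennreal (psi (r0 x))"
      proof eventually_elim
        case (elim x)
        show ?case using r0n[of x] by (simp flip: elim)
      qed
    qed
    also have "\<dots> = (\<integral>\<^sup>+x. ennreal (h x) * ennreal (psi (r0 x)) \<partial>P)"
      unfolding hdens[symmetric] by (subst nn_integral_density) auto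
    also have "\<dots> \<le> (\<integral>\<^sup>+x. Tlim (g x) (h x) \<partial>P)"
    proof (intro nn_integral_mono)
      fix x
      show "ennreal (h x) * ennreal (psi (r0 x)) \<le> Tlim (g x) (h x)"
      proof (cases "0 < h x")
        case True
        have pn: "0 \<le> psi (g x / h x)" by (rule psi_nonneg) (use g0 h0 in auto)
        have "ennreal (h x) * ennreal (psi (r0 x)) = ennreal (h x * psi (g x / h x))"
          using True pn by (simp add: r0_def ennreal_mult)
        also have "\<dots> = ennreal (kk (g x) (h x))" using True by (simp add: psi_dens)
        finally have "ennreal (h x) * ennreal (psi (r0 x)) = ennreal (kk (g x) (h x))" .
        thus ?thesis using True by (simp add: Tlim_def)
      next
        case False
        hence "h x = 0" using h0[of x] by simp
        thus ?thesis by simp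
      qed
    qed
    also have "\<dots> \<le> ennreal B" by (rule Tbound)
    finally have "D_KL \<pi> \<pi>s \<le> enn2ereal (ennreal B)"
      by (simp add: enn2ereal_le_iff)
    thus ?thesis unfolding RHS .
  qed
qed



theorem mainTheorem11:
  fixes N :: nat
    and X :: "nat \<Rightarrow> 'a topology"
    and \<mu> :: "nat \<Rightarrow> 'a measure"
    and c :: "(nat \<Rightarrow> 'a) \<Rightarrow> real"
    and \<pi>star :: "(nat \<Rightarrow> 'a) measure"
  assumes polish: "\<And>i. i \<in> {1..N} \<Longrightarrow> Polish_space (X i)"
    and prob: "\<And>i. i \<in> {1..N} \<Longrightarrow> prob_space (\<mu> i)"
    and sets_mu: "\<And>i. i \<in> {1..N} \<Longrightarrow> sets (\<mu> i) = sets (borel_of (X i))"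
    and c_meas: "c \<in> borel_measurable (prod_space N X)"
    and c_nonneg: "\<And>x. x \<in> space (prod_space N X) \<Longrightarrow> c x \<ge> 0"
    and c_int: "integrable (PiM {1..N} \<mu>) c"
    and opt_coupling: "\<pi>star \<in> couplings N X \<mu>"
    and opt: "enn2ereal (\<integral>\<^sup>+ x. ennreal (c x) \<partial>\<pi>star) + D_KL \<pi>star (PiM {1..N} \<mu>) = S_ent N X \<mu> c"
  shows "\<forall>\<pi>\<in>couplings N X \<mu>. D_KL \<pi> \<pi>star \<le> F_ent N X c \<pi> - F_ent N X c \<pi>star"
proof -
  define P where "P = PiM {1..N} \<mu>"
  have Pprob: "prob_space P" unfolding P_def by (rule prob_space_PiM) (rule prob)
  interpret P: prob_space P by (rule Pprob)
  have setsP: "sets (prod_space N X) = sets P"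
    unfolding P_def prod_space_def by (intro sets_PiM_cong) (auto simp: sets_mu)
  have spaceP: "space (prod_space N X) = space P" by (rule sets_eq_imp_space_eq[OF setsP])
  let ?K = "couplings N X \<mu>"
  have K: "\<And>\<nu>. \<nu> \<in> ?K \<Longrightarrow> prob_space \<nu> \<and> sets \<nu> = sets P"
    unfolding couplings_def using setsP by auto
  have proj_meas: "(\<lambda>x. x i) \<in> measurable \<nu> (borel_of (X i))"
    if "sets \<nu> = sets P" "i \<in> {1..N}" for \<nu> i
  proof -
    have "(\<lambda>x. x i) \<in> measurable P (\<mu> i)" unfolding P_def by (rule measurable_component_singleton) fact
    thus ?thesis using measurable_cong_sets[OF that(1) sets_mu[OF that(2), symmetric]] by simp
  qed
  have marg: "emeasure (marginal X \<nu> i) A = emeasure \<nu> ((\<lambda>x. x i) -` A \<inter> space P)"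
    if "sets \<nu> = sets P" "i \<in> {1..N}" "A \<in> sets (borel_of (X i))" for \<nu> i A
    unfolding marginal_def using proj_meas[OF that(1,2)] that sets_eq_imp_space_eq[OF that(1)]
    by (simp add: emeasure_distr)
  have Kmix: "density P (\<lambda>x. ennreal (1-t) * f x + ennreal t * g x) \<in> ?K"
    if fm: "f \<in> borel_measurable P" and gm: "g \<in> borel_measurable P"
      and fK: "density P f \<in> ?K" and gK: "density P g \<in> ?K" and t: "0 < t" "t < 1" for f g t
  proof -
    let ?m = "density P (\<lambda>x. ennreal (1-t) * f x + ennreal t * g x)"
    have em: "emeasure ?m S = ennreal (1-t) * emeasure (density P f) S + ennreal t * emeasure (density P g) S"
      if "S \<in> sets P" for S
      using that fm gm
      by (simp add: emeasure_density nn_integral_add nn_integral_cmult distrib_right mult.assoc)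
    have one: "ennreal (1-t) * a + ennreal t * a = a" for a
    proof -
      have "ennreal (1-t) * a + ennreal t * a = (ennreal (1-t) + ennreal t) * a" by (simp add: distrib_right)
      also have "ennreal (1-t) + ennreal t = 1" using t by (simp flip: ennreal_plus)
      finally show ?thesis by simp
    qed
    have pf: "prob_space (density P f)" and pg: "prob_space (density P g)" using fK gK K by auto
    have "prob_space ?m"
    proof
      show "emeasure ?m (space ?m) = 1"
        using em[of "space P"] prob_space.emeasure_space_1[OF pf] prob_space.emeasure_space_1[OF pg] one[of 1]
        by simp
    qed
    moreover have "sets ?m = sets (prod_space N X)" using setsP by simp
    moreover have "marginal X ?m i = \<mu> i" if i: "i \<in> {1..N}" for i
    proof (rule measure_eqI)
      show "sets (marginal X ?m i) = sets (\<mu> i)" unfolding marginal_def using sets_mu[OF i] by simp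
    next
      fix A assume "A \<in> sets (marginal X ?m i)"
      hence A: "A \<in> sets (borel_of (X i))" unfolding marginal_def by simp
      have S: "(\<lambda>x. x i) -` A \<inter> space P \<in> sets P"
        using proj_meas[OF refl i] A by (rule measurable_sets)
      have mf: "marginal X (density P f) i = \<mu> i" and mg: "marginal X (density P g) i = \<mu> i"
        using fK gK i unfolding couplings_def by auto
      have "emeasure (marginal X ?m i) A = ennreal (1-t) * emeasure (marginal X (density P f) i) A + ennreal t * emeasure (marginal X (density P g) i) A"
        using marg[of _ i A] i A S em by simp
      also have "\<dots> = emeasure (\<mu> i) A" unfolding mf mg by (rule one)
      finally show "emeasure (marginal X ?m i) A = emeasure (\<mu> i) A" .
    qed
    ultimately show ?thesis unfolding couplings_def by auto
  qed
  have PK: "P \<in> ?K"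
  proof -
    have "marginal X P i = \<mu> i" if i: "i \<in> {1..N}" for i
    proof -
      have "marginal X P i = distr P (\<mu> i) (\<lambda>x. x i)"
        unfolding marginal_def by (rule distr_cong) (auto simp: sets_mu[OF i])
      also have "\<dots> = \<mu> i" unfolding P_def by (rule distr_PiM_component[OF prob i])
      finally show ?thesis .
    qed
    thus ?thesis unfolding couplings_def using Pprob setsP by auto
  qed
  have FG: "F_ent N X c \<nu> = Gf c P \<nu>" if "\<nu> \<in> ?K" for \<nu>
  proof -
    have "PiM {1..N} (marginal X \<nu>) = P"
      unfolding P_def by (rule PiM_cong) (use that in \<open>auto simp: couplings_def\<close>)
    thus ?thesis unfolding F_ent_def Gf_def by simp
  qed
  have optG: "Gf c P \<pi>star \<le> Gf c P \<nu>" if "\<nu> \<in> ?K" for \<nu>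
  proof -
    have "Gf c P \<pi>star = S_ent N X \<mu> c" using opt unfolding Gf_def P_def .
    also have "\<dots> \<le> Gf c P \<nu>" unfolding S_ent_def Gf_def P_def by (rule INF_lower) fact
    finally show ?thesis .
  qed
  have cm[measurable]: "c \<in> borel_measurable P" using c_meas unfolding measurable_cong_sets[OF setsP refl] .
  have c0: "\<And>x. x \<in> space P \<Longrightarrow> 0 \<le> c x" using c_nonneg spaceP by simp
  have fin: "Gf c P \<pi>star < \<infinity>"
  proof -
    have "D_KL P P = enn2ereal (\<integral>\<^sup>+x. ennreal (psi 1) \<partial>P)"
      using D_KL_density[OF Pprob, of "\<lambda>_. 1"] Pprob by (simp add: density_1)
    hence D0: "D_KL P P = 0" by (simp add: psi_def zero_ennreal.rep_eq)
    have "(\<integral>\<^sup>+x. ennreal (c x) \<partial>P) \<noteq> \<infinity>" using c_int unfolding P_def by auto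
    hence "Gf c P P < \<infinity>" unfolding Gf_def D0 by (simp add: less_top[symmetric])
    thus ?thesis using optG[OF PK] by (meson order.strict_trans1)
  qed
  show ?thesis
  proof
    fix \<pi> assume pi: "\<pi> \<in> ?K"
    have "D_KL \<pi> \<pi>star \<le> Gf c P \<pi> - Gf c P \<pi>star"
      by (rule key[OF Pprob K Kmix opt_coupling pi optG fin cm c0])
    thus "D_KL \<pi> \<pi>star \<le> F_ent N X c \<pi> - F_ent N X c \<pi>star"
      using FG[OF pi] FG[OF opt_coupling] by simp
  qed
qed


end
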